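(* Let $n\ge 1$, let $\omega\in(\mathbb{Z}/n\mathbb{Z})^\times$ (represented by an integer), let $r\in\mathbb{Z}/n\mathbb{Z}$, and let $X=\langle\omega\rangle r$. Put $k=\gcd\left(\omega-1,\frac{n}{\gcd(r,n)}\right)$. Then $\sigma_X$ has $k$-fold dihedral symmetry: its image $\{\sigma_X(y):y\in\mathbb{Z}/n\mathbb{Z}\}$ is invariant under complex conjugation and under rotation by $2\pi/k$ about the origin.
   Context: Write $e(\theta)=\exp(2\pi i\theta)$. For a subgroup $A$ of $(\mathbb{Z}/n\mathbb{Z})^\times$ and $r\in\mathbb{Z}/n\mathbb{Z}$, let $X=Ar=\{ar:a\in A\}$ and $\sigma_X(y)=\sum_{x\in X}e\left(\frac{xy}{n}\right)$ for $y\in\mathbb{Z}/n\mathbb{Z}$. $\langle\omega\rangle$ is the cyclic subgroup generated by $\omega$. A function is said to have $k$-fold dihedral symmetry if its image is invariant under the natural action of the dihedral group of order $2k$, i.e. under complex conjugation and rotation by $2\pi/k$ about $0$. *)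

theory Defs
  imports "HOL-Analysis.Analysis"
begin

text \<open>Z/nZ is represented by the integers {0..<n}; residues are reduced with mod n.\<close>

definition e :: "real \<Rightarrow> complex" where
  "e \<theta> = exp (2 * pi * \<i> * complex_of_real \<theta>)"

definition cyc_subgroup :: "int \<Rightarrow> int \<Rightarrow> int set" where
  "cyc_subgroup n w = {(w ^ j) mod n | j. j \<in> (UNIV :: nat set)}"

definition orbit_set :: "int \<Rightarrow> int set \<Rightarrow> int \<Rightarrow> int set" where
  "orbit_set n A r = {(a * r) mod n | a. a \<in> A}"

definition sigma :: "int \<Rightarrow> int set \<Rightarrow> int \<Rightarrow> complex" where
  "sigma n X y = (\<Sum>x\<in>X. e (real_of_int (x * y) / real_of_int n))"

definition has_dihedral_symmetry :: "nat \<Rightarrow> complex set \<Rightarrow> bool" where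
  "has_dihedral_symmetry k S \<longleftrightarrow>
     cnj ` S = S \<and> (\<lambda>z. e (1 / real k) * z) ` S = S"

end

theory Submission
  imports Defs "HOL-Number_Theory.Cong"
begin

lemma e_add: "e (a + b) = e a * e b"
  unfolding e_def by (simp add: distrib_left distrib_right exp_add)

lemma e_int: "e (of_int m) = 1"
proof -
  have "e (of_int m) = exp (0 + \<i> * (of_int m * (of_real pi * 2)))"
    unfolding e_def by (simp add: algebra_simps)
  also have "\<dots> = 1" by (subst exp_plus_2pin) simp
  finally show ?thesis .
qed

lemma e_plus_int: "e (a + of_int m) = e a"
  by (simp add: e_add e_int)

lemma e_cnj: "cnj (e a) = e (- a)"
  unfolding e_def by (simp add: exp_cnj)

lemma sigma_mod:
  assumes "n \<ge> 1"
  shows "sigma n X y = sigma n X (y mod n)"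
  unfolding sigma_def
proof (rule sum.cong[OF refl])
  fix x
  have "x * y = x * (y mod n) + n * (x * (y div n))"
    by (metis (no_types, lifting) distrib_left div_mult_mod_eq mult.assoc mult.commute add.commute)
  hence "real_of_int (x * y) / real_of_int n = real_of_int (x * (y mod n)) / real_of_int n + of_int (x * (y div n))"
    using assms by (simp add: field_simps)
  thus "e (real_of_int (x * y) / real_of_int n) = e (real_of_int (x * (y mod n)) / real_of_int n)"
    by (metis e_plus_int)
qed

lemma cnj_sigma: "cnj (sigma n X y) = sigma n X (- y)"
  unfolding sigma_def by (simp add: e_cnj)

lemma image_eq_of_inj:
  assumes "finite S" "inj f" "f ` S \<subseteq> S"
  shows "f ` S = S"
  using assms by (metis card_image card_subset_eq inj_on_subset subset_UNIV)

theorem proposition3p1: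
  fixes n w r :: int
  assumes "n \<ge> 1"
    and "coprime w n"
  defines "X \<equiv> orbit_set n (cyc_subgroup n w) r"
    and "k \<equiv> gcd (w - 1) (n div gcd r n)"
  shows "has_dihedral_symmetry (nat k) ((\<lambda>y. sigma n X y) ` {0..<n})"
proof -
  define S where "S = (\<lambda>y. sigma n X y) ` {0..<n}"
  have finS: "finite S" unfolding S_def by simp
  have cnjS: "cnj ` S \<subseteq> S"
  proof
    fix z assume "z \<in> cnj ` S"
    then obtain y where "z = cnj (sigma n X y)" unfolding S_def by auto
    hence "z = sigma n X ((- y) mod n)" using cnj_sigma sigma_mod assms(1) by metis
    moreover have "(- y) mod n \<in> {0..<n}" using assms(1) by simp
    ultimately show "z \<in> S" unfolding S_def by blast
  qed
  define g where "g = gcd r n"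
  define n' where "n' = n div g"
  define r' where "r' = r div g"
  have gpos: "g > 0" unfolding g_def using assms(1) by simp
  have n_eq: "n = g * n'" unfolding n'_def g_def by simp
  have r_eq: "r = g * r'" unfolding r'_def g_def by simp
  have cop: "coprime r' n'" unfolding r'_def n'_def g_def
    using div_gcd_coprime[of r n] assms(1) by simp
  have kdef: "k = gcd (w - 1) n'" unfolding k_def n'_def g_def by simp
  have n'pos: "n' > 0" using n_eq gpos assms(1) zero_less_mult_pos[of g n'] by simp
  have kpos: "k > 0" unfolding kdef using n'pos by simp
  have kdvd: "k dvd n'" unfolding kdef by simp
  have kw: "k dvd (w - 1)" unfolding kdef by simp
  have copk: "coprime r' k" using cop kdvd by (meson coprime_imp_coprime dvd_refl dvd_trans)
  obtain s where s: "[r' * s = 1] (mod k)" using cong_solve_coprime_int[OF copk] by blast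
  define t where "t = (n' div k) * s"
  define nk where "nk = n div k"
  have nk_eq: "n = nk * k" unfolding nk_def using kdvd n_eq by simp
  have key: "\<And>x. x \<in> X \<Longrightarrow> e (real_of_int (x * t) / real_of_int n) = e (1 / real_of_int k)"
  proof -
    fix x assume "x \<in> X"
    then obtain j :: nat where xj: "x = ((w ^ j mod n) * r) mod n"
      unfolding X_def orbit_set_def cyc_subgroup_def by auto
    have c1: "[x = w ^ j * r] (mod n)" unfolding xj
      by (metis cong_mod_left cong_mult cong_refl cong_mod_left)
    have wk: "[w = 1] (mod k)" using kw by (simp add: cong_iff_dvd_diff)
    have wjk: "[w ^ j * r' * s = 1] (mod k)"
      using cong_mult[OF cong_pow[OF wk, of j] s] by (simp add: mult.assoc)
    then obtain q where q: "w ^ j * r' * s - 1 = k * q" by (metis cong_iff_dvd_diff dvd_def)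
    have "w ^ j * r * t = nk * (w ^ j * r' * s)"
    proof -
      obtain c where c: "n' = k * c" using kdvd by (auto elim: dvdE)
      have "n' div k = c" using c kpos by simp
      moreover have "nk = g * c" unfolding nk_def n_eq c using kpos by simp
      ultimately show ?thesis unfolding t_def r_eq by (simp add: algebra_simps)
    qed
    also have "\<dots> = nk + n * q" using q nk_eq by (simp add: algebra_simps)
    finally have "[x * t = nk + n * q] (mod n)" using cong_mult[OF c1 cong_refl[of t]] by simp
    hence "[x * t = nk] (mod n)" by (metis cong_add_lcancel_0 cong_mult_self_left cong_trans cong_sym add_0_right cong_add cong_refl)
    then obtain m where m: "x * t - nk = n * m" by (metis cong_iff_dvd_diff cong_sym dvd_def cong_sym_eq)
    have "real_of_int (x * t) / real_of_int n = 1 / real_of_int k + of_int m"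
    proof -
      have "real_of_int (x * t) = real_of_int nk + real_of_int n * of_int m"
        using m by (metis add.commute diff_add_cancel of_int_add of_int_mult)
      moreover have "real_of_int n = real_of_int nk * real_of_int k" using nk_eq by simp
      moreover have "nk \<noteq> 0" using nk_eq assms(1) by auto
      ultimately show ?thesis using kpos assms(1) by (simp add: field_simps)
    qed
    thus "e (real_of_int (x * t) / real_of_int n) = e (1 / real_of_int k)" by (simp add: e_plus_int)
  qed
  have rot: "\<And>y. sigma n X (y + t) = e (1 / real_of_int k) * sigma n X y"
  proof -
    fix y
    have "sigma n X (y + t) = (\<Sum>x\<in>X. e (real_of_int (x * t) / real_of_int n) * e (real_of_int (x * y) / real_of_int n))"
      unfolding sigma_def
      by (rule sum.cong[OF refl], simp add: e_add[symmetric] distrib_left add_divide_distrib add.commute)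
    also have "\<dots> = (\<Sum>x\<in>X. e (1 / real_of_int k) * e (real_of_int (x * y) / real_of_int n))"
      by (rule sum.cong[OF refl]) (metis key)
    also have "\<dots> = e (1 / real_of_int k) * sigma n X y" unfolding sigma_def by (simp add: sum_distrib_left)
    finally show "sigma n X (y + t) = e (1 / real_of_int k) * sigma n X y" .
  qed
  have rk: "real (nat k) = real_of_int k" using kpos by simp
  have rotS: "(\<lambda>z. e (1 / real (nat k)) * z) ` S \<subseteq> S"
  proof
    fix z assume "z \<in> (\<lambda>z. e (1 / real (nat k)) * z) ` S"
    then obtain y where "z = e (1 / real_of_int k) * sigma n X y" unfolding S_def rk by auto
    hence "z = sigma n X ((y + t) mod n)" using rot sigma_mod assms(1) by metis
    moreover have "(y + t) mod n \<in> {0..<n}" using assms(1) by simp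
    ultimately show "z \<in> S" unfolding S_def by blast
  qed
  have ne: "e (1 / real (nat k)) \<noteq> 0" unfolding e_def by simp
  have inj1: "inj cnj" by (meson complex_cnj_cancel_iff injI)
  have inj2: "inj (\<lambda>z. e (1 / real (nat k)) * z)" using ne by (auto intro: injI)
  show ?thesis unfolding has_dihedral_symmetry_def S_def[symmetric]
    using image_eq_of_inj[OF finS inj1 cnjS] image_eq_of_inj[OF finS inj2 rotS] by simp
qed

end
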